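(* Let $S$ be a poset, $S\otimes_i G_i$ a terminating ordered join, and $\sigma\colon S\to S$ a weakly order-preserving involution. Suppose $G_i\simeq_1 G_{\sigma(i)}$ for all $i\in S$ and that the set $S^\sigma=\{i\in S:\sigma(i)=i\}$ of fixed points of $\sigma$ is a lower set of $S$. Then $S\otimes_i G_i\simeq_0 S^\sigma\otimes_i G_i$, where $S^\sigma$ carries the induced order and the right-hand side is the ordered join of the games $G_i$, $i\in S^\sigma$.
   Context: All games are impartial combinatorial games under normal play; a game is determined by its set of options, and $G \to G'$ means $G'$ is an option of $G$. A game is terminating if it admits no infinite sequence of moves. $\mathbf{0}$ denotes the game with no options. The Grundy number of a terminating game $G$ is the ordinal $\Gamma_0(G)=\operatorname{mex}\{\Gamma_0(G') : G\to G'\}$, where $\operatorname{mex}\Lambda$ is the least ordinal not in the set of ordinals $\Lambda$. The Grundy set is $\Gamma_1(G)=\{\Gamma_0(G') : G\to G'\}$. $G\simeq_0 H$ means $\Gamma_0(G)=\Gamma_0(H)$; $G\simeq_1 H$ means $\Gamma_1(G)=\Gamma_1(H)$. Ordered join: for a poset $S$ and a family $(G_i)_{i\in S}$ of games, $S \otimes_i G_i$ is the game whose options are exactly the ordered joins $S \otimes_i G'_i$ obtained by choosing one $i_0\in S$ and an option $G_{i_0}\to G'_{i_0}$, and setting $G'_i=\mathbf{0}$ for all $i>i_0$ and $G'_i=G_i$ for all other $i\ne i_0$. An involution $\sigma\colon S\to S$ (i.e. $\sigma\circ\sigma=\mathrm{id}$) is weakly order-preserving if for each $i\in S$ the set $\{j\in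 S : i<j \text{ or } \sigma(i)<j\}$ is mapped onto itself by $\sigma$. A lower set $L\subseteq S$ is a subset such that $j\in L$ and $i\le j$ imply $i\in L$. *)

theory Defs
  imports Main
begin

text \<open>Impartial games are represented by positions of a type 'p together with a move
relation mv (mv x y means y is an option of x).  Grundy values (ordinals) are taken in a
well-ordered type 'o.\<close>

definition mex :: "'o::wellorder set \<Rightarrow> 'o" where
  "mex A = (LEAST x. x \<notin> A)"

definition move_rel :: "('p \<Rightarrow> 'p \<Rightarrow> bool) \<Rightarrow> ('p \<times> 'p) set" where
  "move_rel mv = {(y, x). mv x y}"

definition terminating :: "('p \<Rightarrow> 'p \<Rightarrow> bool) \<Rightarrow> 'p \<Rightarrow> bool" where
  "terminating mv x \<longleftrightarrow> x \<in> Wellfounded.acc (move_rel mv)"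

definition grundy :: "('p \<Rightarrow> 'p \<Rightarrow> bool) \<Rightarrow> 'p \<Rightarrow> 'o::wellorder" where
  "grundy mv = wfrec {(y, x). (y, x) \<in> move_rel mv \<and> terminating mv x}
                     (\<lambda>g x. mex (g ` {y. mv x y}))"

definition grundy_set :: "('p \<Rightarrow> 'p \<Rightarrow> bool) \<Rightarrow> 'p \<Rightarrow> 'o::wellorder set" where
  "grundy_set mv x = grundy mv ` {y. mv x y}"

text \<open>Ordered join over S \<subseteq> 'i (induced order).  A position of the join is a family
'i \<Rightarrow> 'a option; None stands for the game 0, indices outside S are None.\<close>
definition join_pos :: "'i set \<Rightarrow> ('i \<Rightarrow> 'a) \<Rightarrow> ('i \<Rightarrow> 'a option)" where
  "join_pos S G = (\<lambda>i. if i \<in> S then Some (G i) else None)"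

definition join_move :: "('i::order) set \<Rightarrow> ('a \<Rightarrow> 'a \<Rightarrow> bool)
    \<Rightarrow> ('i \<Rightarrow> 'a option) \<Rightarrow> ('i \<Rightarrow> 'a option) \<Rightarrow> bool" where
  "join_move S mv f f' \<longleftrightarrow>
     (\<exists>i0\<in>S. \<exists>x y. f i0 = Some x \<and> mv x y \<and>
        f' = (\<lambda>i. if i = i0 then Some y else if i \<in> S \<and> i0 < i then None else f i))"

definition involution_on :: "'i set \<Rightarrow> ('i \<Rightarrow> 'i) \<Rightarrow> bool" where
  "involution_on S \<sigma> \<longleftrightarrow> (\<forall>i\<in>S. \<sigma> i \<in> S \<and> \<sigma> (\<sigma> i) = i)"

definition weakly_order_preserving :: "('i::order) set \<Rightarrow> ('i \<Rightarrow> 'i) \<Rightarrow> bool" where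
  "weakly_order_preserving S \<sigma> \<longleftrightarrow>
     (\<forall>i\<in>S. \<sigma> ` {j\<in>S. i < j \<or> \<sigma> i < j} = {j\<in>S. i < j \<or> \<sigma> i < j})"

definition lower_set :: "('i::order) set \<Rightarrow> 'i set \<Rightarrow> bool" where
  "lower_set S L \<longleftrightarrow> L \<subseteq> S \<and> (\<forall>j\<in>L. \<forall>i\<in>S. i \<le> j \<longrightarrow> i \<in> L)"

end

theory Submission
  imports Defs
begin

lemma mex_notin: "A \<noteq> (UNIV :: 'o::wellorder set) \<Longrightarrow> mex A \<notin> A"
proof -
  assume "A \<noteq> UNIV"
  then obtain x where "x \<notin> A" by blast
  then show ?thesis unfolding mex_def by (rule LeastI)
qed

lemma mex_less: "(v::'o::wellorder) < mex A \<Longrightarrow> v \<in> A"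
  unfolding mex_def using not_less_Least by blast

lemma mex_eqI: "(w::'o::wellorder) \<notin> A \<Longrightarrow> (\<And>v. v < w \<Longrightarrow> v \<in> A) \<Longrightarrow> mex A = w"
  unfolding mex_def
proof (rule Least_equality)
  fix y assume "w \<notin> A" "\<And>v. v < w \<Longrightarrow> v \<in> A" "y \<notin> A"
  then show "w \<le> y" using not_le by blast
qed

lemma wf_grundy_rel: fixes mv :: "'p \<Rightarrow> 'p \<Rightarrow> bool" shows "wf {(y, x). (y, x) \<in> move_rel mv \<and> terminating mv x}"
proof -
  let ?R = "{(y, x). (y, x) \<in> move_rel mv \<and> terminating mv x}"
  have sub: "x \<in> Wellfounded.acc ?R" if "x \<in> Wellfounded.acc (move_rel mv)" for x :: 'p
    using that
  proof (induction rule: acc_induct_rule)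
    case (1 x)
    show ?case
    proof (rule Wellfounded.acc.accI)
      fix y assume "(y, x) \<in> ?R"
      then have "(y, x) \<in> move_rel mv" by blast
      with 1(2) show "y \<in> Wellfounded.acc ?R" by blast
    qed
  qed
  have "x \<in> Wellfounded.acc ?R" for x :: 'p
  proof (cases "terminating mv x")
    case True
    then show ?thesis using sub by (simp add: terminating_def)
  next
    case False
    show ?thesis
    proof (rule Wellfounded.acc.accI)
      fix y assume "(y, x) \<in> ?R"
      then have False using False by blast
      then show "y \<in> Wellfounded.acc ?R" ..
    qed
  qed
  then show ?thesis by (simp add: wf_iff_acc)
qed

lemma grundy_eq: "terminating mv x \<Longrightarrow> (grundy mv x :: 'o::wellorder) = mex (grundy mv ` {y. mv x y})"
  unfolding grundy_def
  apply (subst wfrec[OF wf_grundy_rel])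
  apply (rule arg_cong[where f=mex])
  apply (rule image_cong[OF refl])
  apply (simp add: cut_apply move_rel_def)
  done

lemma term_step: "terminating mv x \<Longrightarrow> mv x y \<Longrightarrow> terminating mv y"
  unfolding terminating_def move_rel_def by (erule acc_downward) simp

lemma not_univ1:
  assumes big: "\<not> (\<exists>f :: 'o::wellorder \<Rightarrow> ('i \<Rightarrow> 'a option). inj f)"
  shows "(f :: ('i \<Rightarrow> 'a option) \<Rightarrow> 'o) ` Y \<noteq> UNIV"
proof
  assume "f ` Y = UNIV"
  then have "inj (inv_into Y f)" using inj_on_inv_into[of UNIV f Y] by simp
  with big show False by blast
qed

lemma not_univ2:
  assumes big: "\<not> (\<exists>f :: 'o::wellorder \<Rightarrow> ('i \<Rightarrow> 'a option). inj f)"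
  shows "(f :: 'a \<Rightarrow> 'o) ` Y \<noteq> UNIV"
proof
  assume "f ` Y = UNIV"
  then have i: "inj (inv_into Y f)" using inj_on_inv_into[of UNIV f Y] by simp
  have "inj (\<lambda>t. \<lambda>_::'i. Some (inv_into Y f t))"
  proof (rule injI)
    fix a b assume "(\<lambda>_::'i. Some (inv_into Y f a)) = (\<lambda>_. Some (inv_into Y f b))"
    then have "inv_into Y f a = inv_into Y f b" by (metis option.inject)
    with i show "a = b" by (simp add: inj_eq)
  qed
  with big show False by blast
qed


definition g1 :: "('a \<Rightarrow> 'a \<Rightarrow> bool) \<Rightarrow> 'a option \<Rightarrow> 'o::wellorder set" where
  "g1 mv t = (case t of None \<Rightarrow> {} | Some x \<Rightarrow> grundy_set mv x)"

definition g0 :: "('a \<Rightarrow> 'a \<Rightarrow> bool) \<Rightarrow> 'a option \<Rightarrow> 'o::wellorder" where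
  "g0 mv t = mex (g1 mv t)"

definition restr :: "'i set \<Rightarrow> ('i \<Rightarrow> 'a option) \<Rightarrow> 'i \<Rightarrow> 'a option" where
  "restr L p = (\<lambda>i. if i \<in> L then p i else None)"

definition upd :: "('i::order) set \<Rightarrow> ('i \<Rightarrow> 'a option) \<Rightarrow> 'i \<Rightarrow> 'a \<Rightarrow> 'i \<Rightarrow> 'a option" where
  "upd S p i0 y = (\<lambda>i. if i = i0 then Some y else if i \<in> S \<and> i0 < i then None else p i)"

definition invp :: "'o::wellorder itself \<Rightarrow> ('i::order) set \<Rightarrow> ('i \<Rightarrow> 'i) \<Rightarrow> ('a \<Rightarrow> 'a \<Rightarrow> bool)
   \<Rightarrow> ('i \<Rightarrow> 'a option) \<Rightarrow> bool" where
  "invp T S \<sigma> mv p \<longleftrightarrow> (\<forall>j\<in>S. (g1 mv (p j) :: 'o set) = g1 mv (p (\<sigma> j)) \<or>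
      ((g0 mv (p j) :: 'o) = g0 mv (p (\<sigma> j)) \<and> (\<forall>k\<in>S. (j < k \<or> \<sigma> j < k) \<longrightarrow> p k = None)))"

lemma join_move_iff: "join_move S mv p p' \<longleftrightarrow> (\<exists>i0\<in>S. \<exists>x y. p i0 = Some x \<and> mv x y \<and> p' = upd S p i0 y)"
  by (simp add: join_move_def upd_def)

lemma term_coord:
  assumes "p \<in> Wellfounded.acc (move_rel (join_move S mv))" "j \<in> S" "p j = Some x"
  shows "terminating mv x"
  using assms
proof (induction arbitrary: x rule: acc_induct_rule)
  case (1 p)
  show ?case unfolding terminating_def
  proof (rule Wellfounded.acc.accI)
    fix y assume "(y, x) \<in> move_rel mv"
    then have "mv x y" by (simp add: move_rel_def)
    then have "(upd S p j y, p) \<in> move_rel (join_move S mv)" using 1 by (auto simp: move_rel_def join_move_iff)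
    moreover have "upd S p j y j = Some y" by (simp add: upd_def)
    ultimately show "y \<in> Wellfounded.acc (move_rel mv)" using 1 by (auto simp: terminating_def)
  qed
qed

lemma g0_Some: "terminating mv x \<Longrightarrow> (g0 mv (Some x) :: 'o::wellorder) = grundy mv x"
  by (simp add: g0_def g1_def grundy_set_def grundy_eq)

lemma lift_move:
  assumes "L \<subseteq> S" "join_move L mv (restr L p) q'"
  shows "\<exists>i0\<in>L. \<exists>x y. p i0 = Some x \<and> mv x y \<and> q' = restr L (upd S p i0 y)"
proof -
  from assms(2) obtain i0 x y where i0: "i0 \<in> L" "restr L p i0 = Some x" "mv x y"
    and q': "q' = upd L (restr L p) i0 y" by (auto simp: join_move_iff)
  have "q' = restr L (upd S p i0 y)" using assms(1) i0 q' by (auto simp: restr_def upd_def fun_eq_iff)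
  with i0 show ?thesis by (auto simp: restr_def split: if_splits)
qed

lemma down_move:
  assumes "L \<subseteq> S" "i0 \<in> L" "p i0 = Some x" "mv x y"
  shows "join_move L mv (restr L p) (restr L (upd S p i0 y))"
  unfolding join_move_iff
proof (intro bexI[of _ i0] exI conjI)
  show "restr L p i0 = Some x" using assms by (simp add: restr_def)
  show "restr L (upd S p i0 y) = upd L (restr L p) i0 y" using assms(1,2) by (auto simp: restr_def upd_def fun_eq_iff)
qed (use assms in auto)

lemma restr_acc:
  assumes "L \<subseteq> S" "p \<in> Wellfounded.acc (move_rel (join_move S mv))"
  shows "restr L p \<in> Wellfounded.acc (move_rel (join_move L mv))"
  using assms(2)
proof (induction rule: acc_induct_rule)
  case (1 p)
  show ?case
  proof (rule Wellfounded.acc.accI)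
    fix q' assume "(q', restr L p) \<in> move_rel (join_move L mv)"
    then have "join_move L mv (restr L p) q'" by (simp add: move_rel_def)
    from lift_move[OF assms(1) this] obtain i0 x y where
      i0: "i0 \<in> L" "p i0 = Some x" "mv x y" and q': "q' = restr L (upd S p i0 y)" by blast
    have "(upd S p i0 y, p) \<in> move_rel (join_move S mv)"
      using i0 assms(1) by (auto simp: move_rel_def join_move_iff)
    with 1 q' show "q' \<in> Wellfounded.acc (move_rel (join_move L mv))" by blast
  qed
qed


context
  fixes S :: "'i::order set" and mv :: "'a \<Rightarrow> 'a \<Rightarrow> bool" and \<sigma> :: "'i \<Rightarrow> 'i"
  assumes big: "\<not> (\<exists>f :: 'o::wellorder \<Rightarrow> ('i \<Rightarrow> 'a option). inj f)"
    and inv: "involution_on S \<sigma>"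
    and wop: "weakly_order_preserving S \<sigma>"
    and low: "lower_set S {i\<in>S. \<sigma> i = i}"
begin

lemma sig_in: "i \<in> S \<Longrightarrow> \<sigma> i \<in> S" using inv by (simp add: involution_on_def)
lemma sig_sig: "i \<in> S \<Longrightarrow> \<sigma> (\<sigma> i) = i" using inv by (simp add: involution_on_def)

lemma sym_U: "i \<in> S \<Longrightarrow> k \<in> S \<Longrightarrow> i < k \<or> \<sigma> i < k \<Longrightarrow> i < \<sigma> k \<or> \<sigma> i < \<sigma> k"
proof -
  assume a: "i \<in> S" "k \<in> S" "i < k \<or> \<sigma> i < k"
  have "\<sigma> ` {j\<in>S. i < j \<or> \<sigma> i < j} = {j\<in>S. i < j \<or> \<sigma> i < j}" using wop a(1)
    by (simp add: weakly_order_preserving_def)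
  moreover have "\<sigma> k \<in> \<sigma> ` {j\<in>S. i < j \<or> \<sigma> i < j}" using a by blast
  ultimately show ?thesis by blast
qed

lemma inv_L:
  assumes ip: "invp TYPE('o) S \<sigma> mv p" and i0: "i0 \<in> S" "\<sigma> i0 = i0" "p i0 = Some x"
  shows "invp TYPE('o) S \<sigma> mv (upd S p i0 y)"
  unfolding invp_def
proof
  fix m assume m: "m \<in> S"
  let ?p' = "upd S p i0 y"
  show "(g1 mv (?p' m) :: 'o set) = g1 mv (?p' (\<sigma> m)) \<or>
      ((g0 mv (?p' m) :: 'o) = g0 mv (?p' (\<sigma> m)) \<and> (\<forall>k\<in>S. (m < k \<or> \<sigma> m < k) \<longrightarrow> ?p' k = None))"
  proof (cases "m = i0")
    case True then show ?thesis using i0 by simp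
  next
    case ne: False
    show ?thesis
    proof (cases "i0 < m")
      case True
      have "i0 < \<sigma> m" using sym_U[OF i0(1) m] True i0(2) by auto
      moreover have "\<sigma> m \<noteq> i0" using sig_sig[OF m] i0(2) ne by metis
      ultimately show ?thesis using True ne sig_in[OF m] m by (simp add: upd_def)
    next
      case False
      have s1: "\<sigma> m \<noteq> i0" using sig_sig[OF m] i0(2) ne by metis
      have s2: "\<not> i0 < \<sigma> m" using sym_U[OF i0(1) sig_in[OF m]] i0(2) sig_sig[OF m] False by auto
      have e1: "?p' m = p m" using False ne by (simp add: upd_def)
      have e2: "?p' (\<sigma> m) = p (\<sigma> m)" using s1 s2 by (simp add: upd_def)
      have c: "(g1 mv (p m) :: 'o set) = g1 mv (p (\<sigma> m)) \<or>
      ((g0 mv (p m) :: 'o) = g0 mv (p (\<sigma> m)) \<and> (\<forall>k\<in>S. (m < k \<or> \<sigma> m < k) \<longrightarrow> p k = None))"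
        using ip m by (simp add: invp_def)
      have "p k = None \<Longrightarrow> ?p' k = None" for k using i0(3) by (auto simp: upd_def)
      with c show ?thesis unfolding e1 e2 by blast
    qed
  qed
qed

lemma close:
  assumes ip: "invp TYPE('o) S \<sigma> mv p" and j: "j \<in> S" "\<sigma> j \<noteq> j"
    and c1: "\<And>k. \<not> (k \<in> S \<and> (j < k \<or> \<sigma> j < k)) \<Longrightarrow> k \<noteq> j \<Longrightarrow> k \<noteq> \<sigma> j \<Longrightarrow> p'' k = p k"
    and c2: "\<And>k. k \<in> S \<Longrightarrow> j < k \<or> \<sigma> j < k \<Longrightarrow> p'' k = None"
    and c3: "(g0 mv (p'' j) :: 'o) = g0 mv (p'' (\<sigma> j))"
    and c4: "\<And>k. p k = None \<Longrightarrow> p'' k = None"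
  shows "restr {i\<in>S. \<sigma> i = i} p'' = restr {i\<in>S. \<sigma> i = i} p \<and> invp TYPE('o) S \<sigma> mv p''"
proof
  have UT: "\<sigma> k \<noteq> k" if "k \<in> S" "j < k \<or> \<sigma> j < k" for k
  proof
    assume "\<sigma> k = k"
    then have "k \<in> {i\<in>S. \<sigma> i = i}" using that by simp
    then have "j \<in> {i\<in>S. \<sigma> i = i} \<or> \<sigma> j \<in> {i\<in>S. \<sigma> i = i}"
      using low that j sig_in[OF j(1)] unfolding lower_set_def by (meson less_imp_le)
    then show False using j sig_sig[OF j(1)] by auto
  qed
  show "restr {i\<in>S. \<sigma> i = i} p'' = restr {i\<in>S. \<sigma> i = i} p"
  proof
    fix k
    show "restr {i\<in>S. \<sigma> i = i} p'' k = restr {i\<in>S. \<sigma> i = i} p k"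
    proof (cases "k \<in> S \<and> \<sigma> k = k")
      case True
      then have "k \<noteq> j" "k \<noteq> \<sigma> j" using j sig_sig[OF j(1)] by auto
      moreover have "\<not> (k \<in> S \<and> (j < k \<or> \<sigma> j < k))" using UT True by blast
      ultimately show ?thesis using c1 by (simp add: restr_def)
    qed (auto simp: restr_def)
  qed
  show "invp TYPE('o) S \<sigma> mv p''"
    unfolding invp_def
  proof
    fix m assume m: "m \<in> S"
    show "(g1 mv (p'' m) :: 'o set) = g1 mv (p'' (\<sigma> m)) \<or>
      ((g0 mv (p'' m) :: 'o) = g0 mv (p'' (\<sigma> m)) \<and> (\<forall>k\<in>S. (m < k \<or> \<sigma> m < k) \<longrightarrow> p'' k = None))"
    proof (cases "m = j")
      case True then show ?thesis using c2 c3 by simp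
    next
      case nj: False
      show ?thesis
      proof (cases "m = \<sigma> j")
        case True
        then have "\<sigma> m = j" using sig_sig[OF j(1)] by simp
        then show ?thesis using c2 c3 True by auto
      next
        case nsj: False
        show ?thesis
        proof (cases "j < m \<or> \<sigma> j < m")
          case True
          have "j < \<sigma> m \<or> \<sigma> j < \<sigma> m" using sym_U[OF j(1) m True] .
          then show ?thesis using c2 True m sig_in[OF m] by simp
        next
          case False
          have s: "\<not> (j < \<sigma> m \<or> \<sigma> j < \<sigma> m)"
            using sym_U[OF j(1) sig_in[OF m]] sig_sig[OF m] False by auto
          have s1: "\<sigma> m \<noteq> j" using sig_sig[OF m] sig_sig[OF j(1)] nsj by metis
          have s2: "\<sigma> m \<noteq> \<sigma> j" using sig_sig[OF m] sig_sig[OF j(1)] nj by metis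
          have e1: "p'' m = p m" using c1 False nj nsj by blast
          have e2: "p'' (\<sigma> m) = p (\<sigma> m)" using c1 s s1 s2 by blast
          have c: "(g1 mv (p m) :: 'o set) = g1 mv (p (\<sigma> m)) \<or>
            ((g0 mv (p m) :: 'o) = g0 mv (p (\<sigma> m)) \<and> (\<forall>k\<in>S. (m < k \<or> \<sigma> m < k) \<longrightarrow> p k = None))"
            using ip m by (simp add: invp_def)
          with c4 show ?thesis unfolding e1 e2 by blast
        qed
      qed
    qed
  qed
qed


lemma T_step:
  assumes ip: "invp TYPE('o) S \<sigma> mv p" and acc: "p \<in> Wellfounded.acc (move_rel (join_move S mv))"
    and j: "j \<in> S" "\<sigma> j \<noteq> j" and px: "p j = Some x" and xy: "mv x y"
  shows "\<exists>p''. join_move S mv (upd S p j y) p'' \<and> restr {i\<in>S. \<sigma> i = i} p'' = restr {i\<in>S. \<sigma> i = i} p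
          \<and> invp TYPE('o) S \<sigma> mv p''"
proof -
  have sj: "\<sigma> j \<in> S" "\<sigma> (\<sigma> j) = j" using sig_in[OF j(1)] sig_sig[OF j(1)] by auto
  have inc1: "\<not> j < \<sigma> j"
  proof
    assume a: "j < \<sigma> j"
    then have "j < \<sigma> (\<sigma> j) \<or> \<sigma> j < \<sigma> (\<sigma> j)" using sym_U[OF j(1) sj(1)] by blast
    then show False using a sj(2) by auto
  qed
  have inc2: "\<not> \<sigma> j < j"
  proof
    assume a: "\<sigma> j < j"
    then have "j < \<sigma> j \<or> \<sigma> j < \<sigma> j" using sym_U[OF j(1) j(1)] by blast
    then show False using a by auto
  qed
  have tx: "terminating mv x" using term_coord[OF acc j(1) px] .
  have ty: "terminating mv y" using term_step[OF tx xy] .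
  have gx: "(g0 mv (p j) :: 'o) = grundy mv x" using g0_Some[OF tx] px by simp
  have gyin: "(grundy mv y :: 'o) \<in> grundy_set mv x" using xy by (auto simp: grundy_set_def)
  have gxm: "(grundy mv x :: 'o) = mex (grundy_set mv x)" using grundy_eq[OF tx] by (simp add: grundy_set_def)
  have nu: "grundy_set mv x \<noteq> (UNIV :: 'o set)" unfolding grundy_set_def by (rule not_univ2[OF big])
  have nin: "mex (grundy_set mv x) \<notin> (grundy_set mv x :: 'o set)" by (rule mex_notin[OF nu])
  have ne: "(grundy mv y :: 'o) \<noteq> grundy mv x"
  proof
    assume "(grundy mv y :: 'o) = grundy mv x"
    then have "(grundy mv x :: 'o) \<in> grundy_set mv x" using gyin by simp
    with nin gxm show False by simp
  qed
  have A: "\<exists>p''. join_move S mv (upd S p j y) p'' \<and> restr {i\<in>S. \<sigma> i = i} p'' = restr {i\<in>S. \<sigma> i = i} p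
          \<and> invp TYPE('o) S \<sigma> mv p''" if gin: "(grundy mv y :: 'o) \<in> g1 mv (p (\<sigma> j))"
  proof -
    obtain x2 where px2: "p (\<sigma> j) = Some x2"
      using gin by (cases "p (\<sigma> j)") (auto simp: g1_def)
    then obtain z where z: "mv x2 z" "(grundy mv z :: 'o) = grundy mv y"
      using gin by (auto simp: g1_def grundy_set_def)
    let ?p'' = "upd S (upd S p j y) (\<sigma> j) z"
    have m: "join_move S mv (upd S p j y) ?p''"
      unfolding join_move_iff using sj(1) px2 z(1) j(2) inc1 by (auto simp: upd_def)
    have tz: "terminating mv z" using term_step[OF term_coord[OF acc sj(1) px2] z(1)] .
    have "restr {i\<in>S. \<sigma> i = i} ?p'' = restr {i\<in>S. \<sigma> i = i} p \<and> invp TYPE('o) S \<sigma> mv ?p''"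
    proof (rule close[OF ip j])
      show "?p'' k = p k" if "\<not> (k \<in> S \<and> (j < k \<or> \<sigma> j < k))" "k \<noteq> j" "k \<noteq> \<sigma> j" for k
        using that by (auto simp: upd_def)
      show "?p'' k = None" if "k \<in> S" "j < k \<or> \<sigma> j < k" for k
        using that inc1 inc2 j(2) by (auto simp: upd_def)
      have "?p'' j = Some y" using j(2) inc2 by (simp add: upd_def)
      moreover have "?p'' (\<sigma> j) = Some z" by (simp add: upd_def)
      ultimately show "(g0 mv (?p'' j) :: 'o) = g0 mv (?p'' (\<sigma> j))"
        using g0_Some[OF ty, where 'o='o] g0_Some[OF tz, where 'o='o] z(2) by simp
      show "?p'' k = None" if "p k = None" for k
        using that px px2 by (auto simp: upd_def)
    qed
    with m show ?thesis by blast
  qed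
  have B2: "\<exists>p''. join_move S mv (upd S p j y) p'' \<and> restr {i\<in>S. \<sigma> i = i} p'' = restr {i\<in>S. \<sigma> i = i} p
          \<and> invp TYPE('o) S \<sigma> mv p''"
    if pU: "\<forall>k\<in>S. (j < k \<or> \<sigma> j < k) \<longrightarrow> p k = None" and yy: "mv y y'"
      and gy': "(grundy mv y' :: 'o) = g0 mv (p (\<sigma> j))" for y'
  proof -
    let ?p'' = "upd S (upd S p j y) j y'"
    have m: "join_move S mv (upd S p j y) ?p''"
      unfolding join_move_iff using j(1) yy by (auto simp: upd_def)
    have ty': "terminating mv y'" using term_step[OF ty yy] .
    have "restr {i\<in>S. \<sigma> i = i} ?p'' = restr {i\<in>S. \<sigma> i = i} p \<and> invp TYPE('o) S \<sigma> mv ?p''"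
    proof (rule close[OF ip j])
      show "?p'' k = p k" if "\<not> (k \<in> S \<and> (j < k \<or> \<sigma> j < k))" "k \<noteq> j" "k \<noteq> \<sigma> j" for k
        using that by (auto simp: upd_def)
      show "?p'' k = None" if "k \<in> S" "j < k \<or> \<sigma> j < k" for k
        using that inc1 inc2 j(2) pU by (auto simp: upd_def)
      have "?p'' j = Some y'" by (simp add: upd_def)
      moreover have "?p'' (\<sigma> j) = p (\<sigma> j)" using j(2) inc1 by (simp add: upd_def)
      ultimately show "(g0 mv (?p'' j) :: 'o) = g0 mv (?p'' (\<sigma> j))"
        using g0_Some[OF ty', where 'o='o] gy' by simp
      show "?p'' k = None" if "p k = None" for k
        using that px by (auto simp: upd_def)
    qed
    with m show ?thesis by blast
  qed
  have c: "(g1 mv (p j) :: 'o set) = g1 mv (p (\<sigma> j)) \<or>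
      ((g0 mv (p j) :: 'o) = g0 mv (p (\<sigma> j)) \<and> (\<forall>k\<in>S. (j < k \<or> \<sigma> j < k) \<longrightarrow> p k = None))"
    using ip j(1) by (simp add: invp_def)
  then show ?thesis
  proof
    assume "(g1 mv (p j) :: 'o set) = g1 mv (p (\<sigma> j))"
    then have "(grundy mv y :: 'o) \<in> g1 mv (p (\<sigma> j))" using gyin px by (simp add: g1_def)
    then show ?thesis by (rule A)
  next
    assume b: "(g0 mv (p j) :: 'o) = g0 mv (p (\<sigma> j)) \<and> (\<forall>k\<in>S. (j < k \<or> \<sigma> j < k) \<longrightarrow> p k = None)"
    show ?thesis
    proof (cases "(grundy mv y :: 'o) < grundy mv x")
      case True
      then have "(grundy mv y :: 'o) < mex (g1 mv (p (\<sigma> j)))" using b gx by (simp add: g0_def)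
      then show ?thesis by (intro A mex_less)
    next
      case False
      then have "(grundy mv x :: 'o) < grundy mv y" using ne by auto
      also have "(grundy mv y :: 'o) = mex (grundy_set mv y)"
        using grundy_eq[OF ty] by (simp add: grundy_set_def)
      finally have "(grundy mv x :: 'o) \<in> grundy_set mv y" by (rule mex_less)
      then obtain y' where y': "mv y y'" "(grundy mv y' :: 'o) = grundy mv x" by (auto simp: grundy_set_def)
      have g': "(grundy mv y' :: 'o) = g0 mv (p (\<sigma> j))" using y'(2) gx b by simp
      have pU: "\<forall>k\<in>S. (j < k \<or> \<sigma> j < k) \<longrightarrow> p k = None" using b by blast
      show ?thesis by (rule B2[OF pU y'(1) g'])
    qed
  qed
qed


lemma main:
  assumes "p \<in> Wellfounded.acc (move_rel (join_move S mv))"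
  shows "(invp TYPE('o) S \<sigma> mv p \<longrightarrow> (grundy (join_move S mv) p :: 'o)
            = grundy (join_move {i\<in>S. \<sigma> i = i} mv) (restr {i\<in>S. \<sigma> i = i} p)) \<and>
    (\<forall>p'. join_move S mv p p' \<longrightarrow> invp TYPE('o) S \<sigma> mv p' \<longrightarrow> (grundy (join_move S mv) p' :: 'o)
            = grundy (join_move {i\<in>S. \<sigma> i = i} mv) (restr {i\<in>S. \<sigma> i = i} p'))"
  using assms
proof (induction rule: acc_induct_rule)
  case (1 p)
  let ?L = "{i\<in>S. \<sigma> i = i}"
  let ?JS = "join_move S mv" and ?JL = "join_move ?L mv"
  have LS: "?L \<subseteq> S" by blast
  have IH1: "(grundy ?JS p' :: 'o) = grundy ?JL (restr ?L p')"
    if "?JS p p'" "invp TYPE('o) S \<sigma> mv p'" for p'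
  proof -
    have "(p', p) \<in> move_rel ?JS" using that(1) by (simp add: move_rel_def)
    then show ?thesis using 1(2) that(2) by blast
  qed
  have IH2: "(grundy ?JS p'' :: 'o) = grundy ?JL (restr ?L p'')"
    if "?JS p p'" "?JS p' p''" "invp TYPE('o) S \<sigma> mv p''" for p' p''
  proof -
    have "(p', p) \<in> move_rel ?JS" using that(1) by (simp add: move_rel_def)
    then show ?thesis using 1(2) that(2,3) by blast
  qed
  have first: "invp TYPE('o) S \<sigma> mv p \<longrightarrow> (grundy ?JS p :: 'o) = grundy ?JL (restr ?L p)"
  proof
    assume ip: "invp TYPE('o) S \<sigma> mv p"
    let ?q = "restr ?L p"
    have tp: "terminating ?JS p" using 1(1) by (simp add: terminating_def)
    have tq: "terminating ?JL ?q" using restr_acc[OF LS 1(1)] by (simp add: terminating_def)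
    have gp: "(grundy ?JS p :: 'o) = mex (grundy ?JS ` {p'. ?JS p p'})" by (rule grundy_eq[OF tp])
    have gq: "(grundy ?JL ?q :: 'o) = mex (grundy ?JL ` {q'. ?JL ?q q'})" by (rule grundy_eq[OF tq])
    show "(grundy ?JS p :: 'o) = grundy ?JL ?q" unfolding gp
    proof (rule mex_eqI)
      show "(grundy ?JL ?q :: 'o) \<notin> grundy ?JS ` {p'. ?JS p p'}"
      proof
        assume "(grundy ?JL ?q :: 'o) \<in> grundy ?JS ` {p'. ?JS p p'}"
        then obtain p' where mvp0: "p' \<in> {p'. ?JS p p'}" and eqw0: "(grundy ?JL ?q :: 'o) = grundy ?JS p'"
          by (rule imageE)
        from mvp0 have mvp: "?JS p p'" by simp
        from eqw0 have eqw: "(grundy ?JS p' :: 'o) = grundy ?JL ?q" by simp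
        from mvp obtain i0 x y where i0: "i0 \<in> S" "p i0 = Some x" "mv x y" and p': "p' = upd S p i0 y"
          unfolding join_move_iff by blast
        show False
        proof (cases "\<sigma> i0 = i0")
          case True
          have ip': "invp TYPE('o) S \<sigma> mv p'" using inv_L[OF ip i0(1) True i0(2)] p' by simp
          have e: "(grundy ?JS p' :: 'o) = grundy ?JL (restr ?L p')" using IH1[OF mvp ip'] .
          have i0L: "i0 \<in> ?L" using i0(1) True by simp
          have "?JL ?q (restr ?L p')" using down_move[where p=p and S=S and mv=mv, OF LS i0L i0(2) i0(3)] p' by simp
          then have mem: "restr ?L p' \<in> {q'. ?JL ?q q'}" by simp
          have "(grundy ?JL ?q :: 'o) \<in> grundy ?JL ` {q'. ?JL ?q q'}"
          proof (rule image_eqI)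
            show "(grundy ?JL ?q :: 'o) = grundy ?JL (restr ?L p')" using e eqw by simp
            show "restr ?L p' \<in> {q'. ?JL ?q q'}" by (rule mem)
          qed
          moreover have "(grundy ?JL ?q :: 'o) \<notin> grundy ?JL ` {q'. ?JL ?q q'}"
            unfolding gq by (rule mex_notin[OF not_univ1[OF big]])
          ultimately show False by blast
        next
          case False
          obtain p'' where pp: "?JS p' p''" "restr ?L p'' = ?q" "invp TYPE('o) S \<sigma> mv p''"
            using T_step[OF ip 1(1) i0(1) False i0(2) i0(3)] p' by blast
          have e: "(grundy ?JS p'' :: 'o) = grundy ?JL ?q" using IH2[OF mvp pp(1) pp(3)] pp(2) by simp
          have "(p', p) \<in> move_rel ?JS" using mvp by (simp add: move_rel_def)
          then have accp': "p' \<in> Wellfounded.acc (move_rel ?JS)" by (rule acc_downward[OF 1(1)])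
          have tp': "terminating ?JS p'" using accp' by (simp add: terminating_def)
          have gp': "(grundy ?JS p' :: 'o) = mex (grundy ?JS ` {r. ?JS p' r})" by (rule grundy_eq[OF tp'])
          have "(grundy ?JS p' :: 'o) \<notin> grundy ?JS ` {p''. ?JS p' p''}"
            unfolding gp' by (rule mex_notin[OF not_univ1[OF big]])
          moreover have "(grundy ?JS p' :: 'o) \<in> grundy ?JS ` {p''. ?JS p' p''}"
          proof (rule image_eqI)
            show "(grundy ?JS p' :: 'o) = grundy ?JS p''" using e eqw by simp
            show "p'' \<in> {p''. ?JS p' p''}" using pp(1) by simp
          qed
          ultimately show False by blast
        qed
      qed
      show "v \<in> grundy ?JS ` {p'. ?JS p p'}" if v: "v < (grundy ?JL ?q :: 'o)" for v
      proof -
        have "v \<in> grundy ?JL ` {q'. ?JL ?q q'}" using v unfolding gq by (rule mex_less)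
        then obtain q' where q': "?JL ?q q'" "v = grundy ?JL q'" by blast
        from lift_move[OF LS q'(1)] obtain i0 x y where
          i0: "i0 \<in> ?L" "p i0 = Some x" "mv x y" and q'e: "q' = restr ?L (upd S p i0 y)" by blast
        have mvp: "?JS p (upd S p i0 y)" unfolding join_move_iff using i0 by blast
        have ip': "invp TYPE('o) S \<sigma> mv (upd S p i0 y)" using inv_L[OF ip _ _ i0(2)] i0(1) by simp
        have "(grundy ?JS (upd S p i0 y) :: 'o) = v" using IH1[OF mvp ip'] q' q'e by simp
        with mvp show ?thesis by blast
      qed
    qed
  qed
  then show ?case using IH1 by blast
qed

end

theorem mainTheorem9:
  fixes S :: "'i::order set" and G :: "'i \<Rightarrow> 'a" and mv :: "'a \<Rightarrow> 'a \<Rightarrow> bool"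
    and \<sigma> :: "'i \<Rightarrow> 'i"
  assumes big: "\<not> (\<exists>f :: 'o::wellorder \<Rightarrow> ('i \<Rightarrow> 'a option). inj f)"
    and termin: "terminating (join_move S mv) (join_pos S G)"
    and inv: "involution_on S \<sigma>"
    and wop: "weakly_order_preserving S \<sigma>"
    and sim1: "\<forall>i\<in>S. (grundy_set mv (G i) :: 'o set) = grundy_set mv (G (\<sigma> i))"
    and low: "lower_set S {i\<in>S. \<sigma> i = i}"
  shows "(grundy (join_move S mv) (join_pos S G) :: 'o)
       = grundy (join_move {i\<in>S. \<sigma> i = i} mv) (join_pos {i\<in>S. \<sigma> i = i} G)"
proof -
  have ip: "invp TYPE('o) S \<sigma> mv (join_pos S G)"
    unfolding invp_def
  proof
    fix j assume j: "j \<in> S"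
    then have "\<sigma> j \<in> S" using inv by (simp add: involution_on_def)
    then have "(g1 mv (join_pos S G j) :: 'o set) = g1 mv (join_pos S G (\<sigma> j))"
      using j sim1 by (simp add: g1_def join_pos_def)
    then show "(g1 mv (join_pos S G j) :: 'o set) = g1 mv (join_pos S G (\<sigma> j)) \<or>
      ((g0 mv (join_pos S G j) :: 'o) = g0 mv (join_pos S G (\<sigma> j)) \<and>
       (\<forall>k\<in>S. (j < k \<or> \<sigma> j < k) \<longrightarrow> join_pos S G k = None))" by blast
  qed
  have acc: "join_pos S G \<in> Wellfounded.acc (move_rel (join_move S mv))"
    using termin by (simp add: terminating_def)
  have r: "restr {i\<in>S. \<sigma> i = i} (join_pos S G) = join_pos {i\<in>S. \<sigma> i = i} G"
    by (auto simp: restr_def join_pos_def fun_eq_iff)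
  show ?thesis using main[OF big inv wop low acc] ip r by simp
qed

end
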